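(* Let $D_i$ be a finite set with a total order $\geq_i$ (reflexive, transitive, antisymmetric, total), with strict part $>$. For subsets $X',X''\subseteq D_i$ define $X'\succeq X''$ iff for every $d''\in X''\setminus X'$ there exists $d'\in X'\setminus X''$ with $d'>d''$. Then $\succeq$ is reflexive ($X\succeq X$ for all $X\subseteq D_i$), antisymmetric ($X_1\succeq X_2$ and $X_2\succeq X_1$ imply $X_1=X_2$), and for subsets $X_1,X_2,X_3\subseteq D_i$ with $X_1\not\subseteq X_3$ and $X_3\not\subseteq X_1$, $X_1\succeq X_2$ and $X_2\succeq X_3$ imply $X_1\succeq X_3$.
   Context: Here $D_i$ is the finite set of desire rules of an agent, totally ordered by a priority relation $\geq_i$; $\succeq$ lifts this ordering to sets of desire rules. *)

theory Defs
  imports Main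
begin

definition total_order_on :: "'a set \<Rightarrow> ('a \<Rightarrow> 'a \<Rightarrow> bool) \<Rightarrow> bool" where
  "total_order_on D ge \<longleftrightarrow>
     (\<forall>x\<in>D. ge x x) \<and>
     (\<forall>x\<in>D. \<forall>y\<in>D. \<forall>z\<in>D. ge x y \<and> ge y z \<longrightarrow> ge x z) \<and>
     (\<forall>x\<in>D. \<forall>y\<in>D. ge x y \<and> ge y x \<longrightarrow> x = y) \<and>
     (\<forall>x\<in>D. \<forall>y\<in>D. ge x y \<or> ge y x)"

definition strict_part :: "('a \<Rightarrow> 'a \<Rightarrow> bool) \<Rightarrow> 'a \<Rightarrow> 'a \<Rightarrow> bool" where
  "strict_part ge x y \<longleftrightarrow> ge x y \<and> \<not> ge y x"

definition set_pref :: "('a \<Rightarrow> 'a \<Rightarrow> bool) \<Rightarrow> 'a set \<Rightarrow> 'a set \<Rightarrow> bool" where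
  "set_pref ge X1 X2 \<longleftrightarrow>
     (\<forall>d2 \<in> X2 - X1. \<exists>d1 \<in> X1 - X2. strict_part ge d1 d2)"

end

theory Submission
  imports Defs
begin

lemma max_ex:
  assumes "finite S" "S \<subseteq> D" "S \<noteq> {}" "total_order_on D ge"
  shows "\<exists>m\<in>S. \<forall>z\<in>S. ge m z"
  using assms
proof (induction S rule: finite_induct)
  case empty then show ?case by simp
next
  case (insert x F)
  show ?case
  proof (cases "F = {}")
    case True then show ?thesis using insert by (auto simp: total_order_on_def)
  next
    case False
    then obtain m where m: "m \<in> F" "\<forall>z\<in>F. ge m z" using insert by auto
    have xD: "x \<in> D" "m \<in> D" using insert m by auto
    show ?thesis
    proof (cases "ge m x")
      case True then show ?thesis using m by auto
    next
      case False
      then have "ge x m" using xD \<open>total_order_on D ge\<close> unfolding total_order_on_def by blast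
      then have "\<forall>z\<in>F. ge x z" using m xD insert.prems \<open>total_order_on D ge\<close> unfolding total_order_on_def
        by (meson in_mono insert_subset)
      then show ?thesis using \<open>total_order_on D ge\<close> xD by (auto simp: total_order_on_def)
    qed
  qed
qed

lemma char:
  assumes "finite D" "total_order_on D ge" "X \<subseteq> D" "Y \<subseteq> D"
  shows "set_pref ge X Y \<longleftrightarrow> X = Y \<or> (\<exists>m\<in>X - Y. \<forall>z\<in>(X-Y) \<union> (Y-X). ge m z)"
proof
  assume sp: "set_pref ge X Y"
  show "X = Y \<or> (\<exists>m\<in>X - Y. \<forall>z\<in>(X-Y) \<union> (Y-X). ge m z)"
  proof (cases "X = Y")
    case False
    have "finite ((X-Y) \<union> (Y-X))" using assms finite_subset by blast
    moreover have "(X-Y) \<union> (Y-X) \<subseteq> D" "(X-Y) \<union> (Y-X) \<noteq> {}" using assms False by auto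
    ultimately obtain m where m: "m \<in> (X-Y) \<union> (Y-X)" "\<forall>z\<in>(X-Y) \<union> (Y-X). ge m z"
      using max_ex assms(2) by metis
    have "m \<in> X - Y"
    proof (rule ccontr)
      assume "m \<notin> X - Y"
      then have "m \<in> Y - X" using m by auto
      then obtain d where "d \<in> X - Y" "strict_part ge d m" using sp unfolding set_pref_def by blast
      then show False using m by (auto simp: strict_part_def)
    qed
    then show ?thesis using m by auto
  qed simp
next
  assume h: "X = Y \<or> (\<exists>m\<in>X - Y. \<forall>z\<in>(X-Y) \<union> (Y-X). ge m z)"
  show "set_pref ge X Y"
  proof (cases "X = Y")
    case True then show ?thesis by (simp add: set_pref_def)
  next
    case False
    then obtain m where m: "m \<in> X - Y" "\<forall>z\<in>(X-Y) \<union> (Y-X). ge m z" using h by auto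
    show ?thesis unfolding set_pref_def
    proof
      fix d assume d: "d \<in> Y - X"
      have "ge m d" using m d by auto
      moreover have "\<not> ge d m"
      proof
        assume "ge d m"
        then have "d = m" using \<open>ge m d\<close> assms(2-4) m d unfolding total_order_on_def by blast
        then show False using m d by auto
      qed
      ultimately show "\<exists>d1\<in>X - Y. strict_part ge d1 d" using m by (auto simp: strict_part_def)
    qed
  qed
qed

theorem mainTheorem6:
  fixes D :: "'a set" and ge :: "'a \<Rightarrow> 'a \<Rightarrow> bool"
  assumes "finite D" and "total_order_on D ge"
  shows "(\<forall>X. X \<subseteq> D \<longrightarrow> set_pref ge X X)
    \<and> (\<forall>X1 X2. X1 \<subseteq> D \<longrightarrow> X2 \<subseteq> D \<longrightarrow> set_pref ge X1 X2 \<longrightarrow> set_pref ge X2 X1 \<longrightarrow> X1 = X2)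
    \<and> (\<forall>X1 X2 X3. X1 \<subseteq> D \<longrightarrow> X2 \<subseteq> D \<longrightarrow> X3 \<subseteq> D \<longrightarrow>
          \<not> X1 \<subseteq> X3 \<longrightarrow> \<not> X3 \<subseteq> X1 \<longrightarrow>
          set_pref ge X1 X2 \<longrightarrow> set_pref ge X2 X3 \<longrightarrow> set_pref ge X1 X3)"
proof (intro conjI allI impI)
  fix X show "set_pref ge X X" by (simp add: set_pref_def)
next
  fix X1 X2 assume a: "X1 \<subseteq> D" "X2 \<subseteq> D" "set_pref ge X1 X2" "set_pref ge X2 X1"
  show "X1 = X2"
  proof (rule ccontr)
    assume ne: "X1 \<noteq> X2"
    obtain m where m: "m\<in>X1 - X2" "\<forall>z\<in>(X1-X2) \<union> (X2-X1). ge m z"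
      using char[OF assms a(1,2)] a(3) ne by auto
    obtain n where n: "n\<in>X2 - X1" "\<forall>z\<in>(X2-X1) \<union> (X1-X2). ge n z"
      using char[OF assms a(2,1)] a(4) ne by auto
    have "ge m n" "ge n m" using m n by auto
    then have "m = n" using assms(2) a m n unfolding total_order_on_def by blast
    then show False using m n by auto
  qed
next
  fix X1 X2 X3 assume a: "X1 \<subseteq> D" "X2 \<subseteq> D" "X3 \<subseteq> D" "\<not> X1 \<subseteq> X3" "\<not> X3 \<subseteq> X1"
    "set_pref ge X1 X2" "set_pref ge X2 X3"
  have T: "\<forall>x\<in>D. \<forall>y\<in>D. \<forall>z\<in>D. ge x y \<and> ge y z \<longrightarrow> ge x z"
    and A: "\<forall>x\<in>D. \<forall>y\<in>D. ge x y \<and> ge y x \<longrightarrow> x = y"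
    and L: "\<forall>x\<in>D. \<forall>y\<in>D. ge x y \<or> ge y x"
    using assms(2) unfolding total_order_on_def by blast+
  show "set_pref ge X1 X3"
  proof (cases "X1 = X2")
    case True then show ?thesis using a by simp
  next
    case ne12: False
    show ?thesis
    proof (cases "X2 = X3")
      case True then show ?thesis using a by simp
    next
      case ne23: False
      obtain m where m: "m\<in>X1 - X2" "\<forall>z\<in>(X1-X2) \<union> (X2-X1). ge m z"
        using char[OF assms a(1,2)] a(6) ne12 by auto
      obtain n where n: "n\<in>X2 - X3" "\<forall>z\<in>(X2-X3) \<union> (X3-X2). ge n z"
        using char[OF assms a(2,3)] a(7) ne23 by auto
      have mD: "m \<in> D" and nD: "n \<in> D" using m n a by auto
      have mn: "m \<noteq> n" using m n by auto
      have "\<exists>k\<in>X1 - X3. \<forall>z\<in>(X1-X3) \<union> (X3-X1). ge k z"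
      proof (cases "ge m n")
        case True
        have "\<not> ge n m" using True A mD nD mn by blast
        then have "m \<notin> X3" using m n by auto
        then have "m \<in> X1 - X3" using m by auto
        moreover have "\<forall>z\<in>(X1-X3) \<union> (X3-X1). ge m z"
        proof
          fix z assume z: "z \<in> (X1-X3) \<union> (X3-X1)"
          have zD: "z \<in> D" using z a by auto
          show "ge m z"
          proof (cases "z \<in> (X1-X2) \<union> (X2-X1)")
            case True then show ?thesis using m by auto
          next
            case False
            then have "z \<in> (X2-X3) \<union> (X3-X2)" using z by auto
            then have "ge n z" using n by auto
            then show ?thesis using T True mD nD zD \<open>ge m n\<close> by blast
          qed
        qed
        ultimately show ?thesis by blast
      next
        case False
        then have "ge n m" using L mD nD by blast
        have "n \<in> X1"
        proof (rule ccontr)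
          assume "n \<notin> X1"
          then have "ge m n" using m n by auto
          then show False using False by simp
        qed
        then have "n \<in> X1 - X3" using n by auto
        moreover have "\<forall>z\<in>(X1-X3) \<union> (X3-X1). ge n z"
        proof
          fix z assume z: "z \<in> (X1-X3) \<union> (X3-X1)"
          have zD: "z \<in> D" using z a by auto
          show "ge n z"
          proof (cases "z \<in> (X2-X3) \<union> (X3-X2)")
            case True then show ?thesis using n by auto
          next
            case False
            then have "z \<in> (X1-X2) \<union> (X2-X1)" using z by auto
            then have "ge m z" using m by auto
            then show ?thesis using T \<open>ge n m\<close> mD nD zD by blast
          qed
        qed
        ultimately show ?thesis by blast
      qed
      then show ?thesis using char[OF assms a(1,3)] by blast
    qed
  qed
qed

end
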